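(* Let $M_1$ and $M_2$ be 1-dimensional complex submanifolds of $\mathbb{C}^2$ with $M_1\cap M_2=\{p\}$ and $T_pM_1=T_pM_2$. Choose affine coordinates $(x,y)$ centered at $p$ and $r>0$ such that near $p$, $M_1$ and $M_2$ are the graphs over $\{|x|<r\}$ of holomorphic functions $h_1,h_2$. Then there exist $0<r'\le r$ and $\delta>0$ such that: if $M_1'$ is the graph $\{y=g(x):|x|<r\}$ of a holomorphic function $g$ with $\sup_{|x|<r}|g-h_1|<\delta$ and $M_1'\cap M_1=\emptyset$, then $M_1'$ intersects $\{y=h_2(x):|x|<r'\}$, and every intersection point of $M_1'$ with $\{y=h_2(x):|x|<r'\}$ is transversal (non-tangential). *)

theory Defs
  imports "HOL-Complex_Analysis.Complex_Analysis"
begin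

end

theory Submission
  imports Defs
begin

lemma transv:
  fixes x0 K K' W W' :: complex and m :: nat and a c r \<delta> :: real
  assumes m: "m > 0" and x0: "x0 \<noteq> 0"
   and E0: "x0^m * K + W^m = 0"
   and E1: "of_nat m * x0^(m-1) * K + x0^m * K' + of_nat m * W^(m-1) * W' = 0"
   and xK': "norm x0 * norm K' \<le> a/2" and aK: "a \<le> norm K" and apos: "a > 0"
   and W': "norm W' \<le> 4 * root m c / r" and r: "r > 0" and c: "c \<ge> 0" "c < \<delta>"
   and \<delta>: "\<delta> \<le> a*(r/8)^m"
  shows False
proof -
  obtain n where mn: "m = Suc n" using m gr0_implies_Suc by blast
  define M :: complex where "M = of_nat m"
  have E1': "M * x0^n * K + x0^Suc n * K' + M * W^n * W' = 0" using E1 by (simp add: mn M_def)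
  have E0': "x0^Suc n * K + W^Suc n = 0" using E0 by (simp add: mn)
  have id: "x0^Suc n * (W*(M*K + x0*K') - M*x0*K*W') =
     x0 * W * (M * x0^n * K + x0^Suc n * K' + M * W^n * W') - M*x0*W'*(x0^Suc n*K + W^Suc n)"
    by (simp add: algebra_simps)
  have key: "W*(M*K + x0*K') = M*x0*K*W'"
    using id E0' E1' x0 by simp
  have Kpos: "norm K > 0" using aK apos by linarith
  have m1: "real m \<ge> 1" using m by simp
  have A: "norm (M*K + x0*K') \<ge> real m * norm K - norm x0 * norm K'"
    using norm_diff_ineq[of "M*K" "x0*K'"] by (simp add: M_def norm_mult)
  have "real m * norm K \<ge> norm K" using m1 Kpos by simp
  then have lo: "norm (M*K + x0*K') \<ge> real m * norm K / 2" using A xK' aK by linarith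
  have "norm W * (real m * norm K / 2) \<le> norm W * norm (M*K + x0*K')"
    using lo by (intro mult_left_mono) auto
  also have "\<dots> = real m * norm x0 * norm K * norm W'"
    using arg_cong[OF key, of norm] by (simp add: norm_mult M_def)
  finally have "norm W * (real m * norm K / 2) \<le> (real m * norm K / 2) * (2 * norm x0 * norm W')"
    by (simp add: algebra_simps)
  then have Wle: "norm W \<le> 2 * norm x0 * norm W'"
    using Kpos m1 by (simp add: mult.commute)
  have "norm x0 ^ m * a \<le> norm x0 ^ m * norm K"
    using aK by (simp add: mult_left_mono)
  also have "\<dots> = norm W ^ m"
  proof -
    have "W^m = - (x0^m * K)" using E0 by (simp add: eq_neg_iff_add_eq_0 add.commute)
    then have "norm (W^m) = norm (x0^m * K)" by (simp only: norm_minus_cancel)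
    then show ?thesis by (simp only: norm_mult norm_power)
  qed
  also have "\<dots> \<le> (2 * norm x0 * norm W') ^ m"
    using Wle by (simp add: power_mono)
  also have "\<dots> = norm x0 ^ m * (2 * norm W') ^ m"
    by (simp add: power_mult_distrib)
  finally have "a \<le> (2 * norm W') ^ m" using x0 by simp
  also have "\<dots> \<le> (8 * root m c / r) ^ m"
    using W' r by (intro power_mono) (auto simp: field_simps)
  also have "\<dots> = (8/r)^m * c"
  proof -
    have "8 * root m c / r = (8/r) * root m c" by simp
    then show ?thesis using m c by (simp only: power_mult_distrib real_root_pow_pos2)
  qed
  also have "\<dots> < (8/r)^m * \<delta>" using c r by simp
  also have "\<dots> \<le> (8/r)^m * (a*(r/8)^m)" using \<delta> r by (simp add: mult_left_mono)
  also have "\<dots> = a" using r by (simp add: power_divide field_simps)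
  finally show False by simp
qed

theorem lemma6p4:
  fixes h1 h2 :: "complex \<Rightarrow> complex" and r :: real
  assumes "r > 0"
    and "h1 holomorphic_on ball 0 r" and "h2 holomorphic_on ball 0 r"
    and "h1 0 = 0" and "h2 0 = 0"
    and "deriv h1 0 = deriv h2 0"
    and "\<forall>x\<in>ball 0 r. h1 x = h2 x \<longrightarrow> x = 0"
  shows "\<exists>r' \<delta>. 0 < r' \<and> r' \<le> r \<and> 0 < \<delta> \<and>
    (\<forall>g. g holomorphic_on ball 0 r
        \<and> (\<exists>c<\<delta>. \<forall>x\<in>ball 0 r. cmod (g x - h1 x) \<le> c)
        \<and> (\<forall>x\<in>ball 0 r. g x \<noteq> h1 x)
      \<longrightarrow> (\<exists>x\<in>ball 0 r'. g x = h2 x)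
        \<and> (\<forall>x\<in>ball 0 r'. g x = h2 x \<longrightarrow> deriv g x \<noteq> deriv h2 x))"
proof -
  note rpos = assms(1)
  define f where "f = (\<lambda>x. h1 x - h2 x)"
  have fhol: "f holomorphic_on ball 0 r"
    unfolding f_def using assms(2,3) by (intro holomorphic_intros)
  have f0: "f 0 = 0" using assms(4,5) by (simp add: f_def)
  have nonconst: "\<not> f constant_on ball 0 r"
  proof
    assume "f constant_on ball 0 r"
    then obtain c0 where c0: "\<And>x. x \<in> ball 0 r \<Longrightarrow> f x = c0" by (auto simp: constant_on_def)
    have "0 \<in> ball (0::complex) r" using rpos by simp
    then have "c0 = 0" using c0 f0 by metis
    have "complex_of_real (r/2) \<in> ball 0 r" using rpos by (simp add: norm_divide)
    then have "h1 (r/2) = h2 (r/2)" using c0 \<open>c0 = 0\<close> by (simp add: f_def)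
    then have "complex_of_real (r/2) = 0" using assms(7) \<open>complex_of_real (r/2) \<in> ball 0 r\<close> by blast
    then show False using rpos by simp
  qed
  have z0: "0 \<in> ball (0::complex) r" using rpos by simp
  obtain k r0 m where m: "0 < m" and r0: "0 < r0" and r0sub: "ball (0::complex) r0 \<subseteq> ball 0 r"
    and khol: "k holomorphic_on ball 0 r0"
    and fk: "\<And>w. w \<in> ball 0 r0 \<Longrightarrow> f w = (w - 0)^m * k w"
    and knz: "\<And>w. w \<in> ball 0 r0 \<Longrightarrow> k w \<noteq> 0"
    by (rule holomorphic_factor_zero_nonconstant[OF fhol open_ball connected_ball z0 f0 nonconst])
       (rule that; assumption)
  define R where "R = min r0 r / 2"
  have Rpos: "R > 0" using r0 rpos by (simp add: R_def)
  have Rsub: "cball (0::complex) R \<subseteq> ball 0 r0" using r0 rpos by (auto simp: R_def)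
  have Rr: "R \<le> r/2" by (simp add: R_def)
  have kcont: "continuous_on (cball 0 R) k"
    using khol Rsub by (meson holomorphic_on_imp_continuous_on holomorphic_on_subset)
  have dkcont: "continuous_on (cball 0 R) (deriv k)"
    using holomorphic_deriv[OF khol open_ball] Rsub
    by (meson holomorphic_on_imp_continuous_on holomorphic_on_subset)
  obtain xm where xm: "xm \<in> cball 0 R" "\<And>y. y \<in> cball 0 R \<Longrightarrow> norm (k xm) \<le> norm (k y)"
  proof -
    have "cball (0::complex) R \<noteq> {}" using Rpos by simp
    from continuous_attains_inf[OF compact_cball this continuous_on_norm[OF kcont]]
    show ?thesis using that by blast
  qed
  define a where "a = norm (k xm)"
  have apos: "a > 0" using knz xm Rsub unfolding a_def by auto
  have abound: "\<And>y. y \<in> cball 0 R \<Longrightarrow> a \<le> norm (k y)" using xm a_def by auto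
  obtain B0 where B0: "\<And>y. y \<in> cball 0 R \<Longrightarrow> norm (deriv k y) \<le> B0"
    using compact_imp_bounded[OF compact_continuous_image[OF dkcont compact_cball]]
    unfolding bounded_iff by blast
  define B where "B = max B0 1"
  have Bpos: "B > 0" by (simp add: B_def)
  have Bbound: "\<And>y. y \<in> cball 0 R \<Longrightarrow> norm (deriv k y) \<le> B"
    by (metis B0 B_def max.coboundedI1)
  define r' where "r' = min R (a / (2*B))"
  have r'pos: "r' > 0" using Rpos apos Bpos by (simp add: r'_def)
  have r'R: "r' \<le> R" by (simp add: r'_def)
  have r'B: "r' * B \<le> a / 2" using Bpos
    by (simp add: r'_def min_def field_simps)
  define \<rho> where "\<rho> = r'/2"
  have \<rho>pos: "\<rho> > 0" using r'pos by (simp add: \<rho>_def)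
  define \<delta> where "\<delta> = min (a*(r/8)^m) (a*\<rho>^m/2)"
  have \<delta>le: "\<delta> \<le> \<rho>^m * a / 2" by (simp add: \<delta>_def mult.commute)
  have \<delta>le2: "\<delta> \<le> a*(r/8)^m" by (simp add: \<delta>_def)
  have \<rho>ma: "\<rho>^m * a > 0" using \<rho>pos apos by simp
  have \<delta>pos: "\<delta> > 0" using apos rpos \<rho>pos by (simp add: \<delta>_def)
  show ?thesis
  proof (intro exI conjI allI impI)
    show "0 < r'" "0 < \<delta>" by (fact r'pos, fact \<delta>pos)
    show "r' \<le> r" using r'R Rr rpos by linarith
  next
    fix g
    assume H: "g holomorphic_on ball 0 r
        \<and> (\<exists>c<\<delta>. \<forall>x\<in>ball 0 r. cmod (g x - h1 x) \<le> c)
        \<and> (\<forall>x\<in>ball 0 r. g x \<noteq> h1 x)"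
    then have ghol: "g holomorphic_on ball 0 r" by blast
    from H obtain c where c\<delta>: "c < \<delta>" and cb: "\<And>x. x \<in> ball 0 r \<Longrightarrow> cmod (g x - h1 x) \<le> c"
      by blast
    have unz: "\<And>x. x \<in> ball 0 r \<Longrightarrow> g x - h1 x \<noteq> 0" using H by auto
    define u where "u = (\<lambda>x. g x - h1 x)"
    have uhol: "u holomorphic_on ball 0 r" unfolding u_def using ghol assms(2) by (intro holomorphic_intros)
    have zr: "0 \<in> ball (0::complex) r" using rpos by simp
    have cnn: "c \<ge> 0" using cb[OF zr] by (meson norm_ge_zero order_trans)
    have Ffu: "\<And>x. g x - h2 x = f x + u x" by (simp add: f_def u_def)
    show "\<exists>x\<in>ball 0 r'. g x = h2 x"
    proof (rule ccontr)
      assume "\<not> (\<exists>x\<in>ball 0 r'. g x = h2 x)"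
      then have Fnz: "\<And>x. x \<in> ball 0 r' \<Longrightarrow> f x + u x \<noteq> 0"
        by (auto simp: Ffu[symmetric])
      have r'r: "ball (0::complex) r' \<subseteq> ball 0 r"
        using r'R Rr rpos by auto
      have cb\<rho>: "cball (0::complex) \<rho> \<subseteq> ball 0 r'"
        using r'pos unfolding \<rho>_def by auto
      have Fhol: "(\<lambda>x. 1 / (f x + u x)) holomorphic_on ball 0 r'"
        using Fnz holomorphic_on_subset[OF fhol r'r] holomorphic_on_subset[OF uhol r'r]
        by (intro holomorphic_intros) auto
      have low: "\<rho>^m * a - c > 0"
        using c\<delta> \<delta>le \<rho>ma by linarith
      have "norm (1 / (f 0 + u 0)) \<le> 1 / (\<rho>^m * a - c)"
      proof (rule maximum_modulus_frontier[where S="cball (0::complex) \<rho>" and f="\<lambda>x. 1 / (f x + u x)" and \<xi>=0])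
        show "(\<lambda>x. 1 / (f x + u x)) holomorphic_on interior (cball 0 \<rho>)"
          unfolding interior_cball by (rule holomorphic_on_subset[OF Fhol]) (meson ball_subset_cball cb\<rho> order_trans)
        show "continuous_on (closure (cball 0 \<rho>)) (\<lambda>x. 1 / (f x + u x))"
          using holomorphic_on_imp_continuous_on[OF holomorphic_on_subset[OF Fhol cb\<rho>]] by simp
        show "bounded (cball (0::complex) \<rho>)" by simp
        show "0 \<in> cball (0::complex) \<rho>" using \<rho>pos by simp
      next
        fix z :: complex assume "z \<in> frontier (cball 0 \<rho>)"
        then have nz: "norm z = \<rho>" using \<rho>pos by (simp add: frontier_cball)
        have zR: "z \<in> cball 0 R" using nz r'R \<rho>pos by (simp add: \<rho>_def)
        have zr: "z \<in> ball 0 r" using zR Rr rpos by auto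
        have "norm (f z) = \<rho>^m * norm (k z)"
          using fk[of z] zR Rsub nz by (auto simp: norm_mult norm_power)
        also have "\<dots> \<ge> \<rho>^m * a" using abound[OF zR] \<rho>pos by simp
        finally have "norm (f z) \<ge> \<rho>^m * a" .
        moreover have "norm (u z) \<le> c" using cb[OF zr] by (simp add: u_def)
        ultimately have "norm (f z + u z) \<ge> \<rho>^m * a - c"
          using norm_diff_ineq[of "f z" "u z"] by linarith
        then show "norm (1 / (f z + u z)) \<le> 1 / (\<rho>^m * a - c)"
          using low by (simp add: norm_divide frac_le)
      qed
      then have "1 / norm (u 0) \<le> 1 / (\<rho>^m * a - c)" using f0 by (simp add: norm_divide)
      moreover have "norm (u 0) > 0" using unz[OF zr] by (simp add: u_def)
      ultimately have "\<rho>^m * a - c \<le> norm (u 0)" using low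
        by (metis inverse_eq_divide inverse_le_iff_le)
      moreover have "norm (u 0) \<le> c" using cb[OF zr] by (simp add: u_def)
      ultimately show False using c\<delta> \<delta>le by linarith
    qed
    show "\<forall>x\<in>ball 0 r'. g x = h2 x \<longrightarrow> deriv g x \<noteq> deriv h2 x"
    proof (intro ballI impI notI)
      fix x0 assume x0: "x0 \<in> ball 0 r'" and gx: "g x0 = h2 x0" and dg: "deriv g x0 = deriv h2 x0"
      have x0R: "x0 \<in> cball 0 R" using x0 r'R by auto
      have x0r0: "x0 \<in> ball 0 r0" using x0R Rsub by auto
      have nx0: "norm x0 < r/2" using x0 r'R Rr by auto
      have x0r: "x0 \<in> ball 0 r" using nx0 rpos by auto
      obtain L where Lhol: "L holomorphic_on ball 0 r"
          and Lexp: "\<And>x. x \<in> ball 0 r \<Longrightarrow> exp (L x) = u x"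
        using holomorphic_logarithm_exists[OF convex_ball open_ball uhol _ zr] unz u_def by blast
      define w where "w = (\<lambda>x. exp (L x / of_nat m))"
      have wm: "w x ^ m = u x" if "x \<in> ball 0 r" for x
      proof -
        have "w x ^ m = exp (of_nat m * (L x / of_nat m))"
          unfolding w_def by (simp only: exp_of_nat_mult)
        also have "\<dots> = exp (L x)" using m by simp
        finally show ?thesis using Lexp[OF that] by simp
      qed
      have whol: "w holomorphic_on ball 0 r" unfolding w_def using Lhol by (intro holomorphic_intros) auto
      have wbound: "norm (w x) \<le> root m c" if "x \<in> ball 0 r" for x
      proof -
        have "norm (w x) ^ m = norm (u x)" using wm[OF that] by (metis norm_power)
        also have "\<dots> \<le> c" using cb[OF that] by (simp add: u_def)
        also have "\<dots> = root m c ^ m" using m cnn by simp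
        finally have h: "norm (w x) ^ m \<le> root m c ^ m" .
        have "0 \<le> root m c" using cnn by (rule real_root_ge_zero)
        then show ?thesis using h m by (meson norm_ge_zero power_mono_iff)
      qed
      have cbx0: "cball x0 (r/4) \<subseteq> ball 0 r"
      proof
        fix y assume "y \<in> cball x0 (r/4)"
        then have "norm (y - x0) \<le> r/4" by (simp add: dist_norm norm_minus_commute)
        then have "norm y \<le> norm x0 + r/4" using norm_triangle_ineq[of x0 "y - x0"] by simp
        then show "y \<in> ball 0 r" using nx0 rpos by simp
      qed
      have "norm ((deriv ^^ 1) w x0) \<le> fact 1 * root m c / (r/4)^1"
      proof (rule Cauchy_inequality)
        show "w holomorphic_on ball x0 (r/4)"
          using holomorphic_on_subset[OF whol] cbx0 ball_subset_cball by blast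
        show "continuous_on (cball x0 (r/4)) w"
          using holomorphic_on_imp_continuous_on[OF holomorphic_on_subset[OF whol cbx0]] .
        show "0 < r/4" using rpos by simp
        fix x assume "norm (x0 - x) = r/4"
        then have "x \<in> ball 0 r" using cbx0 by (auto simp: dist_norm)
        then show "norm (w x) \<le> root m c" by (rule wbound)
      qed
      then have W': "norm (deriv w x0) \<le> 4 * root m c / r" by (simp add: mult.commute)
      have Dg: "(g has_field_derivative deriv g x0) (at x0)" by (rule holomorphic_derivI[OF ghol open_ball x0r])
      have Dh1: "(h1 has_field_derivative deriv h1 x0) (at x0)" by (rule holomorphic_derivI[OF assms(2) open_ball x0r])
      have Dh2: "(h2 has_field_derivative deriv h2 x0) (at x0)" by (rule holomorphic_derivI[OF assms(3) open_ball x0r])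
      have Dw: "(w has_field_derivative deriv w x0) (at x0)" by (rule holomorphic_derivI[OF whol open_ball x0r])
      have Dk: "(k has_field_derivative deriv k x0) (at x0)" by (rule holomorphic_derivI[OF khol open_ball x0r0])
      have Du1: "(u has_field_derivative deriv g x0 - deriv h1 x0) (at x0)"
        unfolding u_def by (intro derivative_intros Dg Dh1)
      have Du2: "(u has_field_derivative of_nat m * (deriv w x0 * w x0 ^ (m - Suc 0))) (at x0)"
        by (rule has_field_derivative_transform_within_open[OF DERIV_power[OF Dw] open_ball x0r])
           (simp add: wm)
      have Df1: "(f has_field_derivative deriv h1 x0 - deriv h2 x0) (at x0)"
        unfolding f_def by (intro derivative_intros Dh1 Dh2)
      have Df2: "(f has_field_derivative (of_nat m * (1 * x0 ^ (m - Suc 0))) * k x0 + deriv k x0 * x0^m) (at x0)"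
        by (rule has_field_derivative_transform_within_open[OF DERIV_mult[OF DERIV_power[OF DERIV_ident] Dk] open_ball x0r0])
           (simp add: fk)
      have ud: "deriv g x0 - deriv h1 x0 = of_nat m * (deriv w x0 * w x0 ^ (m - Suc 0))"
        using DERIV_unique[OF Du1 Du2] .
      have fd: "deriv h1 x0 - deriv h2 x0 = (of_nat m * (1 * x0 ^ (m - Suc 0))) * k x0 + deriv k x0 * x0^m"
        using DERIV_unique[OF Df1 Df2] .
      have E1: "of_nat m * x0^(m-1) * k x0 + x0^m * deriv k x0 + of_nat m * w x0^(m-1) * deriv w x0 = 0"
      proof -
        have S: "(of_nat m * (1 * x0 ^ (m - Suc 0))) * k x0 + deriv k x0 * x0^m
            + of_nat m * (deriv w x0 * w x0 ^ (m - Suc 0)) = 0"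
          by (simp only: fd[symmetric] ud[symmetric] dg) simp
        have "of_nat m * x0^(m-1) * k x0 + x0^m * deriv k x0 + of_nat m * w x0^(m-1) * deriv w x0
          = (of_nat m * (1 * x0 ^ (m - Suc 0))) * k x0 + deriv k x0 * x0^m
            + of_nat m * (deriv w x0 * w x0 ^ (m - Suc 0))"
          by (simp add: algebra_simps)
        then show ?thesis using S by (simp add: ac_simps)
      qed
      have E0: "x0^m * k x0 + w x0^m = 0"
        using Ffu[of x0] gx fk[OF x0r0] wm[OF x0r] by (simp add: u_def)
      have x0nz: "x0 \<noteq> 0"
      proof
        assume "x0 = 0"
        then have "w 0 ^ m = 0" using E0 m by (simp add: zero_power)
        then have "u 0 = 0" using wm[OF zr] by simp
        then show False using unz[OF zr] by (simp add: u_def)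
      qed
      have xK': "norm x0 * norm (deriv k x0) \<le> a/2"
      proof -
        have "norm x0 * norm (deriv k x0) \<le> r' * B"
          using x0 Bbound[OF x0R] r'pos by (intro mult_mono) auto
        then show ?thesis using r'B by linarith
      qed
      show False
        by (rule transv[OF m x0nz E0 E1 xK' abound[OF x0R] apos W' rpos cnn c\<delta> \<delta>le2])
    qed
  qed
qed

end
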